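(* Let $(X,d)$ be a finite metric space and $k$ an integer with $2\le k\le|X|$. Let $\mathrm{OPT}\subseteq X$ be a fixed $k$-set maximizing $\mathrm{cl}(T)=\sum_{\{u,v\}\subseteq T}d(u,v)$ over $k$-subsets, let $\Delta=\mathrm{cl}(\mathrm{OPT})/\binom{k}{2}$, let $z_0\in\mathrm{OPT}$ be a point minimizing $\sum_{u\in\mathrm{OPT}}d(z_0,u)$ (the center of the minimum weight spanning star of $\mathrm{OPT}$), and let $B=B(z_0,2\Delta)$. Then $|X\setminus B|<k/2$. Moreover, for any ball $B(u,r)$ with $|X\setminus B(u,r)|<k/2$, we have $d(z_0,u)\le 2\Delta+r$.
   Context: $B(u,r)=\{v\in X: d(u,v)\le r\}$. *)

theory Defs
  imports Complex_Main
begin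

definition metric_on :: "'a set \<Rightarrow> ('a \<Rightarrow> 'a \<Rightarrow> real) \<Rightarrow> bool" where
  "metric_on X d \<longleftrightarrow>
     (\<forall>u\<in>X. \<forall>v\<in>X. 0 \<le> d u v) \<and>
     (\<forall>u\<in>X. \<forall>v\<in>X. d u v = 0 \<longleftrightarrow> u = v) \<and>
     (\<forall>u\<in>X. \<forall>v\<in>X. d u v = d v u) \<and>
     (\<forall>u\<in>X. \<forall>v\<in>X. \<forall>w\<in>X. d u w \<le> d u v + d v w)"

definition cl :: "('a \<Rightarrow> 'a \<Rightarrow> real) \<Rightarrow> 'a set \<Rightarrow> real" where
  "cl d T = (\<Sum>(u,v)\<in>{(u,v). u \<in> T \<and> v \<in> T \<and> u \<noteq> v}. d u v) / 2"

definition mball :: "'a set \<Rightarrow> ('a \<Rightarrow> 'a \<Rightarrow> real) \<Rightarrow> 'a \<Rightarrow> real \<Rightarrow> 'a set" where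
  "mball X d u r = {v \<in> X. d u v \<le> r}"

end

theory Submission
  imports Defs
begin

lemma choose2_real: "real (k choose 2) * 2 = real k * (real k - 1)"
proof (induction k)
  case 0
  then show ?case by simp
next
  case (Suc k)
  have "(Suc k choose (Suc 1)) = (k choose 1) + (k choose (Suc 1))"
    by (rule binomial_Suc_Suc)
  then have "(Suc k choose 2) = (k choose 2) + k"
    by (simp add: numeral_2_eq_2)
  then show ?case using Suc by (simp add: algebra_simps)
qed

definition PP :: "('a \<Rightarrow> 'a \<Rightarrow> real) \<Rightarrow> 'a set \<Rightarrow> real" where
  "PP d T = (\<Sum>a\<in>T. \<Sum>b\<in>T. d a b)"

lemma cl_eq:
  assumes "finite T" "T \<subseteq> X" "metric_on X d"
  shows "cl d T = PP d T / 2"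
proof -
  have z: "d u u = 0" if "u \<in> T" for u
    using assms that unfolding metric_on_def by blast
  have "(\<Sum>(u,v)\<in>{(u,v). u \<in> T \<and> v \<in> T \<and> u \<noteq> v}. d u v) = (\<Sum>(u,v)\<in>T \<times> T. d u v)"
    by (rule sum.mono_neutral_left) (use assms(1) z in auto)
  also have "\<dots> = PP d T" unfolding PP_def by (simp add: sum.cartesian_product)
  finally show ?thesis unfolding cl_def by simp
qed

lemma PP_insert:
  assumes "finite A" "x \<notin> A" "insert x A \<subseteq> X" "metric_on X d"
  shows "PP d (insert x A) = PP d A + 2 * (\<Sum>a\<in>A. d x a)"
proof -
  have z: "d x x = 0" using assms unfolding metric_on_def by blast
  have s: "d a x = d x a" if "a \<in> A" for a
    using assms that unfolding metric_on_def by blast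
  have "PP d (insert x A) = (\<Sum>b\<in>insert x A. d x b) + (\<Sum>a\<in>A. \<Sum>b\<in>insert x A. d a b)"
    unfolding PP_def using assms by simp
  also have "\<dots> = (\<Sum>b\<in>A. d x b) + (\<Sum>a\<in>A. d a x + (\<Sum>b\<in>A. d a b))"
    using assms z by simp
  also have "\<dots> = (\<Sum>b\<in>A. d x b) + (\<Sum>a\<in>A. d x a) + PP d A"
    unfolding PP_def using s by (simp add: sum.distrib)
  finally show ?thesis by simp
qed

lemma PP_remove:
  assumes "finite A" "w \<in> A" "A \<subseteq> X" "metric_on X d"
  shows "PP d A = PP d (A - {w}) + 2 * (\<Sum>a\<in>A. d w a)"
proof -
  have A: "A = insert w (A - {w})" using assms by blast
  have z: "d w w = 0" using assms unfolding metric_on_def by blast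
  have "PP d A = PP d (A - {w}) + 2 * (\<Sum>a\<in>A - {w}. d w a)"
    by (subst A, rule PP_insert) (use assms in auto)
  moreover have "(\<Sum>a\<in>A. d w a) = (\<Sum>a\<in>A - {w}. d w a)"
    using assms z by (simp add: sum.remove)
  ultimately show ?thesis by simp
qed

theorem lemma11:
  fixes X :: "'a set" and d :: "'a \<Rightarrow> 'a \<Rightarrow> real" and k :: nat
    and OPT :: "'a set" and z0 :: 'a and \<Delta> :: real
  assumes "finite X" and "metric_on X d"
    and "2 \<le> k" and "k \<le> card X"
    and "OPT \<subseteq> X" and "card OPT = k"
    and "\<forall>T. T \<subseteq> X \<and> card T = k \<longrightarrow> cl d T \<le> cl d OPT"
    and "\<Delta> = cl d OPT / real (k choose 2)"
    and "z0 \<in> OPT"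
    and "\<forall>z\<in>OPT. (\<Sum>u\<in>OPT. d z0 u) \<le> (\<Sum>u\<in>OPT. d z u)"
  shows "real (card (X - mball X d z0 (2 * \<Delta>))) < real k / 2 \<and>
    (\<forall>u\<in>X. \<forall>r. real (card (X - mball X d u r)) < real k / 2 \<longrightarrow> d z0 u \<le> 2 * \<Delta> + r)"
proof -
  note met = assms(2)[unfolded metric_on_def]
  have finO: "finite OPT" using assms(1,5) finite_subset by blast
  define K where "K = real k"
  have K2: "K \<ge> 2" using assms(3) unfolding K_def by simp
  define S where "S z = (\<Sum>u\<in>OPT. d z u)" for z
  define P where "P = PP d OPT"
  have clO: "cl d OPT = P / 2" unfolding P_def using cl_eq[OF finO assms(5,2)] .
  have c0: "real (k choose 2) > 0" using assms(3) by simp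
  have "P = \<Delta> * (real (k choose 2) * 2)"
    using assms(8) clO c0 by (simp add: field_simps)
  then have PK: "P = K * (K - 1) * \<Delta>"
    unfolding choose2_real K_def by simp
  have Pnn: "P \<ge> 0" unfolding P_def PP_def
    using met assms(5) by (intro sum_nonneg) blast
  have Dnn: "\<Delta> \<ge> 0"
  proof (rule ccontr)
    assume "\<not> \<Delta> \<ge> 0"
    then have "K * (K - 1) * \<Delta> < 0" using K2 by (simp add: mult_pos_neg)
    then show False using PK Pnn by simp
  qed
  have sumS: "(\<Sum>z\<in>OPT. S z) = P" unfolding S_def P_def PP_def ..
  have Sz0: "K * S z0 \<le> P"
  proof -
    have "(\<Sum>z\<in>OPT. S z0) \<le> (\<Sum>z\<in>OPT. S z)"
      by (rule sum_mono) (use assms(10) in \<open>simp add: S_def\<close>)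
    then show ?thesis using sumS assms(6) unfolding K_def by simp
  qed
  have Sz0': "S z0 \<le> (K - 1) * \<Delta>"
  proof -
    have "K * S z0 \<le> K * ((K - 1) * \<Delta>)" using Sz0 PK by (simp add: mult.assoc)
    then show ?thesis using K2 by simp
  qed
  have far: "x \<in> OPT" if xX: "x \<in> X" and xf: "d z0 x > 2 * \<Delta>" for x
  proof (rule ccontr)
    assume xO: "x \<notin> OPT"
    have Dx: "S x > (K + 1) * \<Delta>"
    proof -
      have "d z0 x \<le> d z0 u + d u x" if "u \<in> OPT" for u
        using met assms(5,9) that xX by blast
      moreover have "d u x = d x u" if "u \<in> OPT" for u
        using met assms(5) that xX by blast
      ultimately have "(\<Sum>u\<in>OPT. d z0 x) \<le> (\<Sum>u\<in>OPT. d z0 u + d x u)"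
        by (intro sum_mono) fastforce
      then have "K * d z0 x \<le> S z0 + S x"
        unfolding S_def K_def using assms(6) by (simp add: sum.distrib)
      moreover have "K * d z0 x > K * (2 * \<Delta>)" using xf K2 by simp
      ultimately show ?thesis using Sz0' by (simp add: algebra_simps)
    qed
    have each: "S x - d x w - S w \<le> 0" if wO: "w \<in> OPT" for w
    proof -
      define T where "T = insert x (OPT - {w})"
      have TX: "T \<subseteq> X" unfolding T_def using xX assms(5) by blast
      have cT: "card T = k" unfolding T_def using xO finO wO assms(6) assms(3)
        by (simp add: card_insert_if)
      have "cl d T \<le> cl d OPT" using assms(7) TX cT by blast
      moreover have "cl d T = PP d T / 2"
        using cl_eq[OF _ TX assms(2)] finO unfolding T_def by simp
      moreover have "PP d T = PP d (OPT - {w}) + 2 * (\<Sum>a\<in>OPT - {w}. d x a)"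
        unfolding T_def by (rule PP_insert) (use finO xO xX assms(5,2) in auto)
      moreover have "P = PP d (OPT - {w}) + 2 * S w"
        unfolding P_def S_def by (rule PP_remove[OF finO wO assms(5,2)])
      moreover have "(\<Sum>a\<in>OPT - {w}. d x a) = S x - d x w"
        unfolding S_def using finO wO by (simp add: sum_diff1)
      ultimately show ?thesis using clO by simp
    qed
    have "(\<Sum>w\<in>OPT. S x - d x w - S w) \<le> 0"
      using each by (intro sum_nonpos) blast
    then have "K * S x - S x - P \<le> 0"
      using sumS assms(6) unfolding K_def S_def by (simp add: sum_subtractf)
    then have "(K - 1) * S x \<le> (K - 1) * (K * \<Delta>)" using PK by (simp add: algebra_simps)
    then have "S x \<le> K * \<Delta>" using K2 by simp
    then show False using Dx Dnn by (simp add: algebra_simps)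
  qed
  define m where "m = card (X - mball X d z0 (2 * \<Delta>))"
  have sub: "X - mball X d z0 (2 * \<Delta>) \<subseteq> OPT - mball X d z0 (2 * \<Delta>)"
    using far unfolding mball_def by force
  have part1: "real m < K / 2"
  proof (cases "X - mball X d z0 (2 * \<Delta>) = {}")
    case True
    have "m = 0" unfolding m_def True by simp
    then show ?thesis using K2 by simp
  next
    case False
    let ?F = "X - mball X d z0 (2 * \<Delta>)"
    have finF: "finite ?F" using assms(1) by simp
    have Fsub: "?F \<subseteq> OPT" using sub by blast
    have Ffar: "d z0 u > 2 * \<Delta>" if "u \<in> ?F" for u using that unfolding mball_def by auto
    have "(\<Sum>u\<in>?F. 2 * \<Delta>) < (\<Sum>u\<in>?F. d z0 u)"
      using False finF Ffar by (intro sum_strict_mono) auto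
    also have "\<dots> \<le> S z0" unfolding S_def
      using Fsub finO met assms(5,9) by (intro sum_mono2) blast+
    finally have "real m * (2 * \<Delta>) < (K - 1) * \<Delta>" using Sz0' unfolding m_def by simp
    then have lt: "(real m * 2) * \<Delta> < (K - 1) * \<Delta>" by (simp add: mult.assoc)
    have "\<Delta> \<noteq> 0"
    proof
      assume "\<Delta> = 0"
      then show False using lt by simp
    qed
    then have "\<Delta> > 0" using Dnn by simp
    then have "real m * 2 < K - 1" using lt mult_less_cancel_right_pos by blast
    then show ?thesis by simp
  qed
  show ?thesis
  proof
    show "real (card (X - mball X d z0 (2 * \<Delta>))) < real k / 2"
      using part1 unfolding m_def K_def .
  next
    show "\<forall>u\<in>X. \<forall>r. real (card (X - mball X d u r)) < real k / 2 \<longrightarrow> d z0 u \<le> 2 * \<Delta> + r"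
    proof (intro ballI allI impI)
      fix u r
      assume uX: "u \<in> X" and c: "real (card (X - mball X d u r)) < real k / 2"
      let ?A = "OPT \<inter> mball X d u r"
      let ?B = "OPT \<inter> mball X d z0 (2 * \<Delta>)"
      have "card OPT \<le> card ?A + card (X - mball X d u r)"
      proof -
        have "OPT \<subseteq> ?A \<union> (X - mball X d u r)" using assms(5) by blast
        then have "card OPT \<le> card (?A \<union> (X - mball X d u r))"
          using assms(1) finO by (intro card_mono) auto
        also have "\<dots> \<le> card ?A + card (X - mball X d u r)" by (rule card_Un_le)
        finally show ?thesis .
      qed
      then have cA: "real (card ?A) > K / 2" using c assms(6) unfolding K_def by linarith
      have "card OPT \<le> card ?B + m"
      proof -
        have "OPT \<subseteq> ?B \<union> (X - mball X d z0 (2 * \<Delta>))" using assms(5) by blast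
        then have "card OPT \<le> card (?B \<union> (X - mball X d z0 (2 * \<Delta>)))"
          using assms(1) finO by (intro card_mono) auto
        also have "\<dots> \<le> card ?B + m" unfolding m_def by (rule card_Un_le)
        finally show ?thesis .
      qed
      then have cB: "real (card ?B) > K / 2" using part1 assms(6) unfolding K_def by linarith
      have "?A \<inter> ?B \<noteq> {}"
      proof
        assume e: "?A \<inter> ?B = {}"
        have "card (?A \<union> ?B) = card ?A + card ?B"
          using finO e by (intro card_Un_disjoint) auto
        moreover have "card (?A \<union> ?B) \<le> card OPT" using finO by (intro card_mono) auto
        ultimately show False using cA cB assms(6) unfolding K_def by linarith
      qed
      then obtain w where w: "w \<in> OPT" "d u w \<le> r" "d z0 w \<le> 2 * \<Delta>"
        unfolding mball_def by blast
      have "d z0 u \<le> d z0 w + d w u" using met assms(5,9) w(1) uX by blast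
      moreover have "d w u = d u w" using met assms(5) w(1) uX by blast
      ultimately show "d z0 u \<le> 2 * \<Delta> + r" using w by linarith
    qed
  qed
qed

end
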